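(* Let $H_1,\dots,H_K$ be Hermitian operators and $V_1,\dots,V_K$ unitaries on a finite-dimensional Hilbert space, let $\mathcal S:\{1,\dots,K\}\to\{1,2\}$ assign to each generator one of two real parameters $\theta_1,\theta_2$, let $U(\theta_1,\theta_2)=\prod_{k=1}^KV_ke^{-i\theta_{\mathcal S(k)}H_k}$ (ordered product, $k=1$ leftmost), and $\mathcal{E}_{\theta_1,\theta_2}(A)=U(\theta_1,\theta_2)^\dagger AU(\theta_1,\theta_2)$ for an operator $A$. Then for all integers $p_1,p_2\ge0$ and all $\phi_1,\phi_2\in\mathbb{R}$, $$\left\|\frac{\partial^{p_1+p_2}}{\partial\theta_1^{p_1}\partial\theta_2^{p_2}}\mathcal{E}_{\theta_1,\theta_2}(A)\Big|_{\theta_1=\phi_1,\theta_2=\phi_2}\right\|_\infty\le\Big(\sum_{l\in\mathcal S^{-1}(1)}2\omega^{(\max)}(H_l)\Big)^{p_1}\Big(\sum_{l\in\mathcal S^{-1}(2)}2\omega^{(\max)}(H_l)\Big)^{p_2}\|A\|_\infty.$$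
   Context: $\omega^{(\max)}(H)=\lambda_{\max}(H)-\lambda_{\min}(H)$ (largest minus smallest eigenvalue); $\|\cdot\|_\infty$ is the operator norm; $\mathcal S^{-1}(j)=\{l:\mathcal S(l)=j\}$. *)

theory Defs
  imports "HOL-Analysis.Analysis"
begin

text \<open>Operators on a finite-dimensional complex Hilbert space C^n, with n encoded
  by a finite type 'n, represented as complex n x n matrices. The Hilbert norm on
  complex^'n is the Euclidean norm (sqrt of the sum of squared moduli).\<close>

definition mat_adj :: "complex^'n^'n \<Rightarrow> complex^'n^'n" where
  "mat_adj A = (\<chi> i j. cnj (A $ j $ i))"

definition hermitian_mat :: "complex^'n^'n \<Rightarrow> bool" where
  "hermitian_mat A \<longleftrightarrow> mat_adj A = A"

definition unitary_mat :: "complex^'n^'n \<Rightarrow> bool" where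
  "unitary_mat U \<longleftrightarrow> mat_adj U ** U = mat 1 \<and> U ** mat_adj U = mat 1"

fun mat_pow :: "complex^'n^'n \<Rightarrow> nat \<Rightarrow> complex^'n^'n" where
  "mat_pow A 0 = mat 1"
| "mat_pow A (Suc k) = A ** mat_pow A k"

definition mat_exp :: "complex^'n^'n \<Rightarrow> complex^'n^'n" where
  "mat_exp A = (\<Sum>k. (1 / fact k) *\<^sub>R mat_pow A k)"

definition cscale :: "complex \<Rightarrow> complex^'n^'n \<Rightarrow> complex^'n^'n" where
  "cscale c A = (\<chi> i j. c * A $ i $ j)"

text \<open>Real eigenvalues (all eigenvalues of a Hermitian matrix are real).\<close>
definition eigenvalues_real :: "complex^'n^'n \<Rightarrow> real set" where
  "eigenvalues_real H = {e. \<exists>v. v \<noteq> 0 \<and> H *v v = complex_of_real e *s v}"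

definition omega_max :: "complex^'n^'n \<Rightarrow> real" where
  "omega_max H = Max (eigenvalues_real H) - Min (eigenvalues_real H)"

definition op_norm :: "complex^'n^'n \<Rightarrow> real" where
  "op_norm M = onorm (\<lambda>x. M *v x)"

definition circuit_U ::
  "(nat \<Rightarrow> complex^'n^'n) \<Rightarrow> (nat \<Rightarrow> complex^'n^'n) \<Rightarrow> (nat \<Rightarrow> nat) \<Rightarrow> nat
    \<Rightarrow> real \<Rightarrow> real \<Rightarrow> complex^'n^'n" where
  "circuit_U H V S K t1 t2 =
     foldr (\<lambda>k acc. (V k ** mat_exp (cscale (- \<i> * complex_of_real (if S k = 1 then t1 else t2)) (H k))) ** acc)
       [1..<K+1] (mat 1)"

definition channel ::
  "(nat \<Rightarrow> complex^'n^'n) \<Rightarrow> (nat \<Rightarrow> complex^'n^'n) \<Rightarrow> (nat \<Rightarrow> nat) \<Rightarrow> nat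
    \<Rightarrow> real \<Rightarrow> real \<Rightarrow> complex^'n^'n \<Rightarrow> complex^'n^'n" where
  "channel H V S K t1 t2 A = mat_adj (circuit_U H V S K t1 t2) ** A ** circuit_U H V S K t1 t2"

definition nth_deriv :: "nat \<Rightarrow> (real \<Rightarrow> 'a::real_normed_vector) \<Rightarrow> real \<Rightarrow> 'a" where
  "nth_deriv p f = ((\<lambda>g t. vector_derivative g (at t)) ^^ p) f"

definition mixed_partial ::
  "nat \<Rightarrow> nat \<Rightarrow> (real \<Rightarrow> real \<Rightarrow> 'a::real_normed_vector) \<Rightarrow> real \<Rightarrow> real \<Rightarrow> 'a" where
  "mixed_partial p1 p2 F x1 x2 = nth_deriv p1 (\<lambda>t1. nth_deriv p2 (\<lambda>t2. F t1 t2) x2) x1"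

end

theory Submission
  imports Defs
begin


type_synonym 'n cmat = "complex^'n^'n"

lemma bl_mv: "bounded_linear (\<lambda>x. (M::'n::finite cmat) *v x)"
  using matrix_vector_mul_bounded_linear[of M] by simp

lemma op_norm_ge0: "0 \<le> op_norm (M::'n::finite cmat)"
  unfolding op_norm_def by (rule onorm_pos_le[OF bl_mv])

lemma op_norm_apply: "norm ((M::'n::finite cmat) *v x) \<le> op_norm M * norm x"
  unfolding op_norm_def by (rule onorm[OF bl_mv])

lemma op_norm_bound: "(\<And>x. norm ((M::'n::finite cmat) *v x) \<le> b * norm x) \<Longrightarrow> op_norm M \<le> b"
  unfolding op_norm_def by (rule onorm_le)

lemma op_norm_add: "op_norm ((M::'n::finite cmat) + N) \<le> op_norm M + op_norm N"
proof -
  have "(\<lambda>x. (M + N) *v x) = (\<lambda>x. M *v x + N *v x)"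
    by (simp add: matrix_vector_mult_add_rdistrib)
  thus ?thesis unfolding op_norm_def using onorm_triangle[OF bl_mv bl_mv] by simp
qed

lemma op_norm_scaleR: "op_norm (r *\<^sub>R (M::'n::finite cmat)) = \<bar>r\<bar> * op_norm M"
proof -
  have "(\<lambda>x. (r *\<^sub>R M) *v x) = (\<lambda>x. r *\<^sub>R (M *v x))"
    by (auto simp: vec_eq_iff matrix_vector_mult_def scaleR_sum_right)
  thus ?thesis unfolding op_norm_def using onorm_scaleR[OF bl_mv] by simp
qed

lemma op_norm_mult: "op_norm ((M::'n::finite cmat) ** N) \<le> op_norm M * op_norm N"
proof -
  have "(\<lambda>x. (M ** N) *v x) = (\<lambda>x. M *v x) o (\<lambda>x. N *v x)"
    by (auto simp: matrix_vector_mul_assoc)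
  thus ?thesis unfolding op_norm_def using onorm_compose[OF bl_mv bl_mv] by simp
qed

lemma mat_eq_by_apply: "(\<And>x. (M::'n::finite cmat) *v x = N *v x) \<Longrightarrow> M = N"
proof -
  assume h: "\<And>x. M *v x = N *v x"
  have "M $ i $ j = N $ i $ j" for i j
    using h[of "axis j 1"] by (simp add: vec_eq_iff matrix_vector_mult_def axis_def if_distrib[of "\<lambda>x. _ * x"] cong: if_cong)
  thus ?thesis by (simp add: vec_eq_iff)
qed

lemma op_norm_eq_0: "op_norm (M::'n::finite cmat) = 0 \<longleftrightarrow> M = 0"
proof
  assume "op_norm M = 0"
  hence "(\<lambda>x. M *v x) = (\<lambda>x. 0)" unfolding op_norm_def using onorm_eq_0[OF bl_mv] by blast
  thus "M = 0" by (intro mat_eq_by_apply) (metis matrix_vector_mult_0)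
qed (simp add: op_norm_def onorm_zero)

lemma op_norm_one: "op_norm (mat 1 :: 'n::finite cmat) = 1"
proof -
  have "(*v) (mat 1 :: 'n cmat) = (\<lambda>x. x)" by (rule ext) simp
  thus ?thesis unfolding op_norm_def by (simp add: onorm_id)
qed

lemma entry_le_op_norm: "norm ((M::'n::finite cmat) $ i $ j) \<le> op_norm M"
proof -
  have "M $ i $ j = (M *v axis j 1) $ i"
    by (simp add: matrix_vector_mult_def axis_def if_distrib[of "\<lambda>x. _ * x"] cong: if_cong)
  also have "norm \<dots> \<le> norm (M *v axis j 1)" by (rule Finite_Cartesian_Product.norm_nth_le)
  also have "\<dots> \<le> op_norm M * norm (axis j (1::complex))" by (rule op_norm_apply)
  also have "norm (axis j (1::complex)) = 1"
    by (simp add: norm_vec_def L2_set_def axis_def if_distrib[of "\<lambda>x. (norm x)^2"] cong: if_cong)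
  finally show ?thesis by simp
qed

lemma frob_le_op: "norm (M::'n::finite cmat) \<le> real CARD('n) * real CARD('n) * op_norm M"
proof -
  have "norm M \<le> (\<Sum>i\<in>UNIV. norm (M $ i))" by (simp add: norm_vec_def L2_set_le_sum)
  also have "\<dots> \<le> (\<Sum>i\<in>(UNIV::'n set). \<Sum>j\<in>(UNIV::'n set). op_norm M)"
  proof (rule sum_mono)
    fix i
    have "norm (M $ i) \<le> (\<Sum>j\<in>UNIV. norm (M $ i $ j))" by (simp add: norm_vec_def L2_set_le_sum)
    also have "\<dots> \<le> (\<Sum>j\<in>(UNIV::'n set). op_norm M)" by (rule sum_mono) (rule entry_le_op_norm)
    finally show "norm (M $ i) \<le> (\<Sum>j\<in>(UNIV::'n set). op_norm M)" .
  qed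
  finally show ?thesis by simp
qed

lemma op_le_frob: "\<exists>K. \<forall>M::'n::finite cmat. op_norm M \<le> K * norm M"
proof -
  have "bilinear (\<lambda>(M::'n cmat) (x::complex^'n). M *v x)"
    unfolding bilinear_def
    by (auto intro!: linearI simp: matrix_vector_mult_add_rdistrib matrix_vector_right_distrib
        vec_eq_iff matrix_vector_mult_def scaleR_sum_right sum.distrib algebra_simps)
  then have "bounded_bilinear (\<lambda>(M::'n cmat) (x::complex^'n). M *v x)"
    by (simp add: bilinear_conv_bounded_bilinear)
  then obtain K where K: "\<And>M x. norm ((M::'n cmat) *v x) \<le> norm M * norm x * K"
    using bounded_bilinear.bounded by blast
  have "op_norm M \<le> K * norm M" for M :: "'n cmat"
    by (rule op_norm_bound) (metis K mult.commute mult.left_commute)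
  thus ?thesis by blast
qed


typedef (overloaded) ('n::finite) cm = "UNIV :: ('n cmat) set" morphisms Rep_cm Abs_cm by auto
setup_lifting type_definition_cm

instantiation cm :: (finite) real_normed_algebra_1
begin
lift_definition zero_cm :: "'a cm" is "0" .
lift_definition one_cm :: "'a cm" is "mat 1" .
lift_definition plus_cm :: "'a cm \<Rightarrow> 'a cm \<Rightarrow> 'a cm" is "(+)" .
lift_definition minus_cm :: "'a cm \<Rightarrow> 'a cm \<Rightarrow> 'a cm" is "(-)" .
lift_definition uminus_cm :: "'a cm \<Rightarrow> 'a cm" is "uminus" .
lift_definition times_cm :: "'a cm \<Rightarrow> 'a cm \<Rightarrow> 'a cm" is "(**)" .
lift_definition scaleR_cm :: "real \<Rightarrow> 'a cm \<Rightarrow> 'a cm" is "scaleR" .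
lift_definition norm_cm :: "'a cm \<Rightarrow> real" is "op_norm" .
definition dist_cm :: "'a cm \<Rightarrow> 'a cm \<Rightarrow> real" where "dist_cm a b = norm (a - b)"
definition sgn_cm :: "'a cm \<Rightarrow> 'a cm" where "sgn_cm x = scaleR (inverse (norm x)) x"
definition uniformity_cm :: "('a cm \<times> 'a cm) filter" where
  "uniformity_cm = (INF e\<in>{0 <..}. principal {(x, y). dist x y < e})"
definition open_cm :: "'a cm set \<Rightarrow> bool" where
  "open_cm S = (\<forall>x\<in>S. \<forall>\<^sub>F (x', y) in uniformity. x' = x \<longrightarrow> y \<in> S)"
instance
proof
  fix a b c :: "'a cm" and r s :: real
  show "a + b + c = a + (b + c)" by transfer (simp add: add.assoc)
  show "a + b = b + a" by transfer (simp add: add.commute)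
  show "0 + a = a" by transfer simp
  show "- a + a = 0" by transfer simp
  show "a - b = a + - b" by transfer simp
  show "r *\<^sub>R (a + b) = r *\<^sub>R a + r *\<^sub>R b" by transfer (simp add: scaleR_add_right)
  show "(r + s) *\<^sub>R a = r *\<^sub>R a + s *\<^sub>R a" by transfer (simp add: scaleR_add_left)
  show "r *\<^sub>R s *\<^sub>R a = (r * s) *\<^sub>R a" by transfer simp
  show "1 *\<^sub>R a = a" by transfer simp
  show "a * b * c = a * (b * c)" by transfer (simp add: matrix_mul_assoc)
  show "1 * a = a" by transfer simp
  show "a * 1 = a" by transfer simp
  show "(a + b) * c = a * c + b * c" by transfer (simp add: vec_eq_iff matrix_matrix_mult_def distrib_right sum.distrib)
  show "a * (b + c) = a * b + a * c" by transfer (simp add: matrix_add_ldistrib)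
  show "(0::'a cm) \<noteq> 1" apply transfer by (metis op_norm_one op_norm_eq_0 zero_neq_one)
  show "r *\<^sub>R a * b = r *\<^sub>R (a * b)" by transfer (simp add: vec_eq_iff matrix_matrix_mult_def scaleR_sum_right)
  show "a * r *\<^sub>R b = r *\<^sub>R (a * b)" by transfer (simp add: vec_eq_iff matrix_matrix_mult_def scaleR_sum_right)
  show "norm (1::'a cm) = 1" by transfer (rule op_norm_one)
  show "norm (a * b) \<le> norm a * norm b" by transfer (rule op_norm_mult)
  show "dist a b = norm (a - b)" by (simp add: dist_cm_def)
  show "sgn a = inverse (norm a) *\<^sub>R a" by (simp add: sgn_cm_def)
  show "(uniformity :: ('a cm \<times> 'a cm) filter) = (INF e\<in>{0 <..}. principal {(x, y). dist x y < e})" by (simp add: uniformity_cm_def)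
  show "norm a = 0 \<longleftrightarrow> a = 0" by transfer (rule op_norm_eq_0)
  show "norm (a + b) \<le> norm a + norm b" by transfer (rule op_norm_add)
  show "norm (r *\<^sub>R a) = \<bar>r\<bar> * norm a" by transfer (rule op_norm_scaleR)
  fix U :: "'a cm set"
  show "open U = (\<forall>x\<in>U. \<forall>\<^sub>F (x', y) in uniformity. x' = x \<longrightarrow> y \<in> U)" by (simp add: open_cm_def)
qed
end

lemma bl_Rep: "bounded_linear (Rep_cm :: 'n::finite cm \<Rightarrow> 'n cmat)"
proof
  show "Rep_cm (x + y) = Rep_cm x + Rep_cm y" for x y :: "'n cm" by transfer simp
  show "Rep_cm (r *\<^sub>R x) = r *\<^sub>R Rep_cm x" for r and x :: "'n cm" by transfer simp
  show "\<exists>K. \<forall>x::'n cm. norm (Rep_cm x) \<le> norm x * K"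
    by (rule exI[of _ "real CARD('n) * real CARD('n)"], transfer) (metis frob_le_op mult.commute)
qed

lemma bl_Abs: "bounded_linear (Abs_cm :: 'n cmat \<Rightarrow> 'n::finite cm)"
proof
  show "Abs_cm (x + y) = Abs_cm x + Abs_cm y" for x y :: "'n cmat" by (simp add: plus_cm.abs_eq)
  show "Abs_cm (r *\<^sub>R x) = r *\<^sub>R Abs_cm x" for r and x :: "'n cmat" by (simp add: scaleR_cm.abs_eq)
  obtain K where K: "\<forall>M::'n cmat. op_norm M \<le> K * norm M" using op_le_frob by blast
  show "\<exists>K. \<forall>x::'n cmat. norm (Abs_cm x :: 'n cm) \<le> norm x * K"
    by (rule exI[of _ K]) (simp add: norm_cm.abs_eq K mult.commute)
qed

instance cm :: (finite) banach
proof
  fix X :: "nat \<Rightarrow> 'a cm"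
  assume "Cauchy X"
  have "Cauchy (\<lambda>n. Rep_cm (X n))"
    by (rule bounded_linear.Cauchy[OF bl_Rep \<open>Cauchy X\<close>])
  then obtain L where "(\<lambda>n. Rep_cm (X n)) \<longlonglongrightarrow> L" using Cauchy_convergent_iff convergent_def by blast
  then have "(\<lambda>n. Abs_cm (Rep_cm (X n))) \<longlonglongrightarrow> Abs_cm L" by (rule bounded_linear.tendsto[OF bl_Abs])
  thus "convergent X" by (auto simp: Rep_cm_inverse convergent_def)
qed


lemma selfadj_expand:
  fixes T :: "'a::real_inner \<Rightarrow> 'a"
  assumes lin: "linear T" and sa: "\<And>x y. inner (T x) y = inner x (T y)"
  shows "inner (T (x + s *\<^sub>R z)) (x + s *\<^sub>R z) = inner (T x) x + 2 * s * inner (T x) z + s^2 * inner (T z) z"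
proof -
  have "T (x + s *\<^sub>R z) = T x + s *\<^sub>R T z" using lin by (simp add: linear_add linear_scale)
  moreover have "inner (T z) x = inner (T x) z" using sa[of z x] by (simp add: inner_commute)
  ultimately show ?thesis by (simp add: inner_add_left inner_add_right power2_eq_square algebra_simps)
qed

lemma selfadj_max_zero:
  fixes T :: "'a::real_inner \<Rightarrow> 'a"
  assumes lin: "linear T" and sa: "\<And>x y. inner (T x) y = inner x (T y)"
    and neg: "\<And>z. inner (T z) z \<le> 0" and x0: "inner (T x0) x0 = 0"
  shows "T x0 = 0"
proof (rule ccontr)
  assume ne: "T x0 \<noteq> 0"
  define a where "a = inner (T x0) (T x0)"
  define c where "c = - inner (T (T x0)) (T x0)"
  have a: "a > 0" using ne by (simp add: a_def)
  have c: "c \<ge> 0" using neg[of "T x0"] by (simp add: c_def)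
  define s where "s = a / (c + 1)"
  have s: "s > 0" using a c by (simp add: s_def)
  have "inner (T (x0 + s *\<^sub>R T x0)) (x0 + s *\<^sub>R T x0) \<le> 0" by (rule neg)
  hence "2 * s * a - s^2 * c \<le> 0" using selfadj_expand[OF lin sa, of x0 s "T x0"] x0
    by (simp add: a_def c_def)
  hence "s * (2 * a) \<le> s * (s * c)" by (simp add: power2_eq_square algebra_simps)
  hence "2 * a \<le> s * c" using s by (simp add: mult_le_cancel_left_pos)
  also have "s * c < a" using a c by (simp add: s_def field_simps)
  finally show False using a by simp
qed

lemma selfadj_norm_bound:
  fixes T :: "'a::real_inner \<Rightarrow> 'a"
  assumes lin: "linear T" and sa: "\<And>x y. inner (T x) y = inner x (T y)"
    and bd: "\<And>z. \<bar>inner (T z) z\<bar> \<le> w * (norm z)^2"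
  shows "norm (T x) \<le> w * norm x"
proof (cases "T x = 0")
  case True
  have "0 \<le> w * (norm x)^2" using bd[of x] abs_ge_zero order_trans by blast
  then have "0 \<le> w * norm x" by (cases "x = 0") (auto simp: zero_le_mult_iff)
  then show ?thesis using True by simp
next
  case False
  define y where "y = (norm x / norm (T x)) *\<^sub>R T x"
  have ny: "norm y = norm x" using False by (simp add: y_def)
  have ixy: "inner (T x) y = norm x * norm (T x)" using False
    by (simp add: y_def power2_norm_eq_inner[symmetric] power2_eq_square)
  have e1: "inner (T (x + y)) (x + y) = inner (T x) x + 2 * inner (T x) y + inner (T y) y"
    using selfadj_expand[OF lin sa, of x 1 y] by simp
  have e2: "inner (T (x + (-1) *\<^sub>R y)) (x + (-1) *\<^sub>R y) = inner (T x) x - 2 * inner (T x) y + inner (T y) y"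
    using selfadj_expand[OF lin sa, of x "-1" y] by simp
  have "4 * inner (T x) y \<le> w * (norm (x + y))^2 + w * (norm (x + (-1) *\<^sub>R y))^2"
    using bd[of "x + y"] bd[of "x + (-1) *\<^sub>R y"] e1 e2 by linarith
  also have "(norm (x + y))^2 + (norm (x + (-1) *\<^sub>R y))^2 = 2 * (norm x)^2 + 2 * (norm y)^2"
    by (simp add: power2_norm_eq_inner inner_add_left inner_add_right inner_diff_left inner_diff_right inner_commute)
  hence "w * (norm (x + y))^2 + w * (norm (x + (-1) *\<^sub>R y))^2 = 4 * w * (norm x)^2"
    using ny by (simp add: algebra_simps) (metis distrib_left)
  finally have "norm x * norm (T x) \<le> w * (norm x) * norm x" using ixy by (simp add: power2_eq_square)
  moreover have "norm x > 0" using False linear_0[OF lin] by (metis zero_less_norm_iff)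
  ultimately show ?thesis by (simp add: mult.commute)
qed


lemma cinner: "inner (a::complex) b = Re (a * cnj b)"
  by (simp add: inner_complex_def)

lemma adj_inner: "inner ((M::'n::finite cmat) *v x) y = inner x (mat_adj M *v y)"
proof -
  have "inner (M *v x) y = Re (\<Sum>i\<in>UNIV. \<Sum>j\<in>UNIV. M $ i $ j * x $ j * cnj (y $ i))"
    by (simp add: inner_vec_def cinner matrix_vector_mult_def sum_distrib_right Re_sum)
  also have "\<dots> = Re (\<Sum>j\<in>UNIV. \<Sum>i\<in>UNIV. M $ i $ j * x $ j * cnj (y $ i))"
    by (subst sum.swap) simp
  also have "\<dots> = inner x (mat_adj M *v y)"
    by (simp add: inner_vec_def cinner matrix_vector_mult_def mat_adj_def sum_distrib_left Re_sum mult_ac)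
  finally show ?thesis .
qed

lemma herm_sa: "hermitian_mat H \<Longrightarrow> inner ((H::'n::finite cmat) *v x) y = inner x (H *v y)"
  using adj_inner[of H x y] by (simp add: hermitian_mat_def)

lemma smult_real: "complex_of_real e *s (v::complex^'n) = e *\<^sub>R v"
  by (simp add: vec_eq_iff) (simp add: scaleR_conv_of_real)

lemma scaleR_mv: "(r *\<^sub>R (M::'n::finite cmat)) *v x = r *\<^sub>R (M *v x)"
  by (auto simp: vec_eq_iff matrix_vector_mult_def scaleR_sum_right)

lemma scal_mat_apply: "((c *\<^sub>R mat 1) :: 'n::finite cmat) *v x = c *\<^sub>R x"
  by (simp add: scaleR_mv)

lemma norm_axis_c: "norm (axis j (1::complex)) = 1"
  by (simp add: norm_vec_def L2_set_def axis_def if_distrib[of "\<lambda>x. (norm x)^2"] cong: if_cong)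

lemma lin_mv: "linear (\<lambda>x. (M::'n::finite cmat) *v x)"
  using bl_mv bounded_linear.linear by blast

lemma mv_scaleR: "(M::'n::finite cmat) *v (r *\<^sub>R x) = r *\<^sub>R (M *v x)"
  using lin_mv[of M] by (simp add: linear_scale)

lemma hermitian_spectral:
  fixes H :: "'n::finite cmat"
  assumes herm: "hermitian_mat H"
  shows "0 \<le> omega_max H \<and> (\<exists>c. op_norm (H - c *\<^sub>R mat 1) \<le> omega_max H)"
proof -
  define q where "q x = inner (H *v x) x" for x
  define S1 where "S1 = sphere (0::complex^'n) 1"
  have cS1: "compact S1" by (simp add: S1_def)
  have neS1: "S1 \<noteq> {}" using norm_axis_c[of undefined] by (auto simp: S1_def)
  have cq: "continuous_on S1 q" unfolding q_def
    by (intro continuous_intros linear_continuous_on bl_mv)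
  obtain x1 where x1: "x1 \<in> S1" "\<And>y. y \<in> S1 \<Longrightarrow> q y \<le> q x1"
    using continuous_attains_sup[OF cS1 neS1 cq] by blast
  obtain x0 where x0: "x0 \<in> S1" "\<And>y. y \<in> S1 \<Longrightarrow> q x0 \<le> q y"
    using continuous_attains_inf[OF cS1 neS1 cq] by blast
  define m where "m = q x1"
  define m' where "m' = q x0"
  have qscale: "q (r *\<^sub>R u) = r^2 * q u" for r u
    by (simp add: q_def mv_scaleR power2_eq_square)
  have qbd: "m' * (norm z)^2 \<le> q z \<and> q z \<le> m * (norm z)^2" for z
  proof (cases "z = 0")
    case True then show ?thesis by (simp add: q_def)
  next
    case False
    define u where "u = (1 / norm z) *\<^sub>R z"
    have u: "u \<in> S1" using False by (simp add: S1_def u_def)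
    have z: "z = norm z *\<^sub>R u" using False by (simp add: u_def)
    have "q z = (norm z)^2 * q u" by (subst z, rule qscale)
    then show ?thesis using x1(2)[OF u] x0(2)[OF u] mult_right_mono[of _ _ "(norm z)^2"] by (simp add: m_def m'_def mult.commute)
  qed
  have qnorm: "inner z z = (norm z)^2" for z :: "complex^'n" by (simp add: power2_norm_eq_inner)
  define T1 where "T1 x = H *v x - m *\<^sub>R x" for x
  have "T1 = (\<lambda>x. (H - m *\<^sub>R mat 1) *v x)"
    by (rule ext) (simp add: T1_def matrix_vector_mult_diff_rdistrib scal_mat_apply)
  then have linT1: "linear T1" using lin_mv by metis
  have saT1: "inner (T1 x) y = inner x (T1 y)" for x y
    by (simp add: T1_def inner_diff_left inner_diff_right herm_sa[OF herm])
  have T1x1: "T1 x1 = 0"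
  proof (rule selfadj_max_zero[OF linT1 saT1])
    show "inner (T1 z) z \<le> 0" for z using qbd[of z] by (simp add: T1_def inner_diff_left q_def qnorm)
    show "inner (T1 x1) x1 = 0" using x1(1) by (simp add: T1_def inner_diff_left q_def qnorm m_def S1_def)
  qed
  define E where "E = eigenvalues_real H"
  have x1ne: "x1 \<noteq> 0" using x1(1) by (auto simp: S1_def)
  have mE: "m \<in> E" using T1x1 x1ne by (auto simp: E_def eigenvalues_real_def smult_real T1_def)
  define T2 where "T2 x = m' *\<^sub>R x - H *v x" for x
  have "T2 = (\<lambda>x. (m' *\<^sub>R mat 1 - H) *v x)"
    by (rule ext) (simp add: T2_def matrix_vector_mult_diff_rdistrib scal_mat_apply)
  then have linT2: "linear T2" using lin_mv by metis
  have saT2: "inner (T2 x) y = inner x (T2 y)" for x y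
    by (simp add: T2_def inner_diff_left inner_diff_right herm_sa[OF herm])
  have T2x0: "T2 x0 = 0"
  proof (rule selfadj_max_zero[OF linT2 saT2])
    show "inner (T2 z) z \<le> 0" for z using qbd[of z] by (simp add: T2_def inner_diff_left q_def qnorm)
    show "inner (T2 x0) x0 = 0" using x0(1) by (simp add: T2_def inner_diff_left q_def qnorm m'_def S1_def)
  qed
  have x0ne: "x0 \<noteq> 0" using x0(1) by (auto simp: S1_def)
  have m'E: "m' \<in> E" using T2x0 x0ne by (auto simp: E_def eigenvalues_real_def smult_real T2_def)
  have Ebd: "m' \<le> e \<and> e \<le> m" if "e \<in> E" for e
  proof -
    from that have "\<exists>v. v \<noteq> 0 \<and> H *v v = complex_of_real e *s v" by (simp add: E_def eigenvalues_real_def)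
    then obtain v where v: "v \<noteq> 0" "H *v v = e *\<^sub>R v" by (auto simp only: smult_real)
    have qv: "q v = e * (norm v)^2" by (simp add: q_def v(2) qnorm)
    have "(norm v)^2 > 0" using v(1) by simp
    then show ?thesis using qbd[of v] qv by (simp add: mult_le_cancel_right_pos)
  qed
  have finE: "finite E"
  proof -
    define f where "f e = (SOME v. v \<noteq> 0 \<and> H *v v = e *\<^sub>R v)" for e
    have f: "f e \<noteq> 0 \<and> H *v f e = e *\<^sub>R f e" if "e \<in> E" for e
    proof -
      from that have "\<exists>v. v \<noteq> 0 \<and> H *v v = complex_of_real e *s v" by (simp add: E_def eigenvalues_real_def)
      then have "\<exists>v. v \<noteq> 0 \<and> H *v v = e *\<^sub>R v" by (simp only: smult_real)
      then show ?thesis unfolding f_def by (rule someI_ex)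
    qed
    have orth: "inner (f e1) (f e2) = 0" if "e1 \<in> E" "e2 \<in> E" "e1 \<noteq> e2" for e1 e2
    proof -
      have "e1 * inner (f e1) (f e2) = inner (H *v f e1) (f e2)" using f[OF that(1)] by simp
      also have "\<dots> = inner (f e1) (H *v f e2)" by (rule herm_sa[OF herm])
      also have "\<dots> = e2 * inner (f e1) (f e2)" using f[OF that(2)] by simp
      finally show ?thesis using that(3) by simp
    qed
    have inj: "inj_on f E"
    proof (rule inj_onI)
      fix a b assume ab: "a \<in> E" "b \<in> E" "f a = f b"
      show "a = b"
      proof (rule ccontr)
        assume "a \<noteq> b"
        then have "inner (f a) (f a) = 0" using orth[OF ab(1,2)] ab(3) by simp
        then show False using f[OF ab(1)] by simp
      qed
    qed
    have "independent (f ` E)"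
      by (rule pairwise_orthogonal_independent)
        (use f orth in \<open>auto simp: pairwise_def orthogonal_def\<close>)
    then have "finite (f ` E)" using independent_bound by blast
    then show ?thesis using finite_imageD inj by blast
  qed
  have MaxE: "Max E = m" by (rule Max_eqI[OF finE]) (use Ebd mE in auto)
  have MinE: "Min E = m'" by (rule Min_eqI[OF finE]) (use Ebd m'E in auto)
  have om: "omega_max H = m - m'" using MaxE MinE by (simp add: omega_max_def E_def)
  have ge: "0 \<le> omega_max H" using om Ebd[OF mE] by simp
  define T3 where "T3 x = (H - m' *\<^sub>R mat 1) *v x" for x
  have T3eq: "T3 x = H *v x - m' *\<^sub>R x" for x
    by (simp add: T3_def matrix_vector_mult_diff_rdistrib scal_mat_apply)
  have linT3: "linear T3" unfolding T3_def by (rule lin_mv)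
  have saT3: "inner (T3 x) y = inner x (T3 y)" for x y
    by (simp add: T3eq inner_diff_left inner_diff_right herm_sa[OF herm])
  have "norm (T3 x) \<le> omega_max H * norm x" for x
  proof (rule selfadj_norm_bound[OF linT3 saT3])
    show "\<bar>inner (T3 z) z\<bar> \<le> omega_max H * (norm z)^2" for z
      using qbd[of z] by (simp add: T3eq inner_diff_left q_def qnorm om algebra_simps)
  qed
  then have "op_norm (H - m' *\<^sub>R mat 1) \<le> omega_max H"
    by (intro op_norm_bound) (simp add: T3_def)
  then show ?thesis using ge by blast
qed


definition cs :: "complex \<Rightarrow> 'n::finite cm" where "cs c = Abs_cm (cscale c (mat 1))"
definition adj :: "'n::finite cm \<Rightarrow> 'n cm" where "adj x = Abs_cm (mat_adj (Rep_cm x))"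

lemmas Rep_ops = times_cm.rep_eq plus_cm.rep_eq minus_cm.rep_eq uminus_cm.rep_eq
  scaleR_cm.rep_eq one_cm.rep_eq zero_cm.rep_eq

lemma cm_eqI: "Rep_cm x = Rep_cm y \<Longrightarrow> x = y" by (simp add: Rep_cm_inject)

lemma norm_Rep: "op_norm (Rep_cm x) = norm x" by (simp add: norm_cm.rep_eq)

lemma Rep_cs: "Rep_cm (cs c :: 'n::finite cm) = cscale c (mat 1)"
  by (simp add: cs_def Abs_cm_inverse)

lemma Rep_adj: "Rep_cm (adj x) = mat_adj (Rep_cm x)"
  by (simp add: adj_def Abs_cm_inverse)

lemma ifmul1: "(c::complex) * (if b then 1 else 0) * z = (if b then c * z else 0)" by simp
lemma ifmul2: "(z::complex) * (c * (if b then 1 else 0)) = (if b then z * c else 0)" by simp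
lemma ifmul3: "(if b then 1 else 0) * (z::complex) = (if b then z else 0)" by simp

lemma cscale_mult_left: "cscale c (mat 1) ** (M::'n::finite cmat) = cscale c M"
  by (simp add: vec_eq_iff matrix_matrix_mult_def cscale_def mat_def ifmul1 cong: if_cong)

lemma cscale_mult_right: "(M::'n::finite cmat) ** cscale c (mat 1) = cscale c M"
  by (simp add: vec_eq_iff matrix_matrix_mult_def cscale_def mat_def ifmul2 mult.commute cong: if_cong)

lemma cs_comm: "cs c * x = x * (cs c :: 'n::finite cm)"
  by (rule cm_eqI) (simp add: Rep_ops Rep_cs cscale_mult_left cscale_mult_right)

lemma cs_mult: "cs c * cs d = (cs (c * d) :: 'n::finite cm)"
  by (rule cm_eqI) (simp add: Rep_ops Rep_cs cscale_mult_left, simp add: cscale_def vec_eq_iff mat_def)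

lemma cs_Abs: "Abs_cm (cscale c M) = cs c * (Abs_cm M :: 'n::finite cm)"
  by (rule cm_eqI) (simp add: Rep_ops Rep_cs cscale_mult_left Abs_cm_inverse)

lemma cs_of_real: "cs (complex_of_real r) = (r *\<^sub>R 1 :: 'n::finite cm)"
proof (rule cm_eqI)
  have "(cscale (complex_of_real r) (mat 1) :: 'n cmat) $ i $ j = ((r *\<^sub>R mat 1) :: 'n cmat) $ i $ j" for i j
    by (simp add: cscale_def mat_def of_real_def)
  then show "Rep_cm (cs (complex_of_real r)) = Rep_cm (r *\<^sub>R 1 :: 'n cm)"
    by (simp add: Rep_ops Rep_cs vec_eq_iff)
qed

lemma cs_minus: "cs (- c) = - (cs c :: 'n::finite cm)"
  by (rule cm_eqI) (simp add: Rep_ops Rep_cs, simp add: cscale_def vec_eq_iff)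

lemma norm_cs: "norm (cs c :: 'n::finite cm) \<le> cmod c"
proof -
  have "norm (cscale c (mat 1) *v x) \<le> cmod c * norm x" for x :: "complex^'n"
  proof -
    have "cscale c (mat 1) *v x = (\<chi> i. c * x $ i)"
      by (simp add: vec_eq_iff matrix_vector_mult_def cscale_def mat_def ifmul1 cong: if_cong)
    then have "norm (cscale c (mat 1) *v x) = L2_set (\<lambda>i. cmod c * cmod (x $ i)) UNIV"
      by (simp add: norm_vec_def norm_mult)
    also have "\<dots> = cmod c * norm x" by (simp add: L2_set_right_distrib norm_vec_def)
    finally show ?thesis by simp
  qed
  then show ?thesis by (simp add: norm_Rep[symmetric] Rep_cs op_norm_bound)
qed

lemma mat_adj_adj: "mat_adj (mat_adj M) = M" by (simp add: mat_adj_def vec_eq_iff)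

lemma mat_adj_mult: "mat_adj ((A::'n::finite cmat) ** B) = mat_adj B ** mat_adj A"
  by (simp add: mat_adj_def vec_eq_iff matrix_matrix_mult_def mult.commute)

lemma adj_adj: "adj (adj x) = x" by (rule cm_eqI) (simp add: Rep_adj mat_adj_adj)
lemma adj_mult: "adj (x * y) = adj y * adj x" by (rule cm_eqI) (simp add: Rep_adj Rep_ops mat_adj_mult)
lemma adj_add: "adj (x + y) = adj x + adj y" by (rule cm_eqI) (simp add: Rep_adj Rep_ops, simp add: mat_adj_def vec_eq_iff)
lemma adj_scaleR: "adj (r *\<^sub>R x) = r *\<^sub>R adj x" by (rule cm_eqI) (simp add: Rep_adj Rep_ops, simp add: mat_adj_def vec_eq_iff)
lemma adj_one: "adj 1 = 1" by (rule cm_eqI) (simp add: Rep_adj Rep_ops, simp add: mat_adj_def vec_eq_iff mat_def)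
lemma adj_cs: "adj (cs c) = cs (cnj c)" by (rule cm_eqI) (simp add: Rep_adj Rep_cs, simp add: mat_adj_def cscale_def vec_eq_iff mat_def)
lemma adj_minus: "adj (- x) = - adj x" by (rule cm_eqI) (simp add: Rep_adj Rep_ops, simp add: mat_adj_def vec_eq_iff)

lemma op_norm_adj_le: "op_norm (mat_adj (M::'n::finite cmat)) \<le> op_norm M"
proof (rule op_norm_bound)
  fix y :: "complex^'n"
  have "(norm (mat_adj M *v y))^2 = inner (mat_adj M *v y) (mat_adj M *v y)" by (simp add: power2_norm_eq_inner)
  also have "\<dots> = inner (M *v (mat_adj M *v y)) y"
    using adj_inner[of "M" "mat_adj M *v y" y] by (simp add: inner_commute)
  also have "\<dots> \<le> norm (M *v (mat_adj M *v y)) * norm y" by (rule norm_cauchy_schwarz)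
  also have "\<dots> \<le> op_norm M * norm (mat_adj M *v y) * norm y"
    by (intro mult_right_mono op_norm_apply) simp
  finally have "norm (mat_adj M *v y) * norm (mat_adj M *v y) \<le> (op_norm M * norm y) * norm (mat_adj M *v y)"
    by (simp add: power2_eq_square mult_ac)
  then show "norm (mat_adj M *v y) \<le> op_norm M * norm y"
    by (cases "norm (mat_adj M *v y) = 0") (auto simp: mult_le_cancel_right op_norm_ge0)
qed

lemma norm_adj: "norm (adj x) \<le> norm x"
  using op_norm_adj_le[of "Rep_cm x"] by (simp add: norm_Rep[symmetric] Rep_adj)

lemma bl_adj: "bounded_linear (adj :: 'n::finite cm \<Rightarrow> 'n cm)"
  by (rule bounded_linear_intro[of _ 1]) (auto simp: adj_add adj_scaleR norm_adj)

lemma adj_pow: "adj (x ^ n) = adj x ^ n"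
  by (induction n) (simp_all add: adj_one adj_mult power_commutes)

lemma adj_exp: "adj (exp x) = exp (adj x)"
proof -
  have "(\<lambda>n. adj (x^n /\<^sub>R fact n)) sums adj (exp x)"
    by (rule bounded_linear.sums[OF bl_adj exp_converges])
  then have "(\<lambda>n. (adj x)^n /\<^sub>R fact n) sums adj (exp x)"
    by (simp add: adj_scaleR adj_pow)
  then show ?thesis using exp_converges sums_unique2 by blast
qed

lemma unitary_norm:
  assumes "adj x * x = 1"
  shows "norm x \<le> 1"
proof -
  have u: "mat_adj (Rep_cm x) ** Rep_cm x = mat 1"
    using arg_cong[OF assms, of Rep_cm] by (simp add: Rep_ops Rep_adj)
  have "norm (Rep_cm x *v y) \<le> 1 * norm y" for y
  proof -
    have "inner (Rep_cm x *v y) (Rep_cm x *v y) = inner y (mat_adj (Rep_cm x) *v (Rep_cm x *v y))"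
      by (rule adj_inner)
    also have "\<dots> = inner y y" by (simp add: matrix_vector_mul_assoc u)
    finally have "(norm (Rep_cm x *v y))^2 = (norm y)^2" by (simp add: power2_norm_eq_inner)
    then show ?thesis by simp
  qed
  then show ?thesis using op_norm_bound norm_Rep by metis
qed

lemma Rep_pow: "Rep_cm (x ^ k) = mat_pow (Rep_cm x) k"
  by (induction k) (simp_all add: Rep_ops)

lemma mat_exp_Rep: "mat_exp (M::'n::finite cmat) = Rep_cm (exp (Abs_cm M))"
proof -
  have "(\<lambda>n. Rep_cm ((Abs_cm M)^n /\<^sub>R fact n)) sums Rep_cm (exp (Abs_cm M :: 'n cm))"
    by (rule bounded_linear.sums[OF bl_Rep exp_converges])
  then have "(\<lambda>n. (1 / fact n) *\<^sub>R mat_pow M n) sums Rep_cm (exp (Abs_cm M :: 'n cm))"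
    by (simp add: Rep_ops Rep_pow Abs_cm_inverse divide_inverse)
  then show ?thesis unfolding mat_exp_def by (rule sums_unique[symmetric])
qed


lemma cs_left: "x * (cs c * y) = cs c * (x * (y :: 'n::finite cm))"
  by (metis cs_comm mult.assoc)

lemma cs_right: "x * cs c = cs c * (x :: 'n::finite cm)"
  by (rule cs_comm[symmetric])

definition inc :: "(nat \<Rightarrow> nat) \<Rightarrow> nat \<Rightarrow> nat \<Rightarrow> nat" where "inc e k = e(k := Suc (e k))"

definition pp1 :: "nat \<Rightarrow> real \<Rightarrow> real \<Rightarrow> real" where "pp1 j t1 t = (if j = 1 then t else t1)"
definition pp2 :: "nat \<Rightarrow> real \<Rightarrow> real \<Rightarrow> real" where "pp2 j t2 t = (if j = 2 then t else t2)"

locale circ =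
  fixes h v :: "nat \<Rightarrow> 'n::finite cm" and S :: "nat \<Rightarrow> nat" and K :: nat and om :: "nat \<Rightarrow> real"
  assumes herm: "\<And>k. k \<in> {1..K} \<Longrightarrow> adj (h k) = h k"
    and unit: "\<And>k. k \<in> {1..K} \<Longrightarrow> adj (v k) * v k = 1 \<and> v k * adj (v k) = 1"
    and S12: "\<And>k. k \<in> {1..K} \<Longrightarrow> S k \<in> {1, 2}"
    and spec: "\<And>k. k \<in> {1..K} \<Longrightarrow> 0 \<le> om k \<and> (\<exists>c. norm (h k - c *\<^sub>R 1) \<le> om k)"
begin

definition b where "b k = cs (- \<i>) * h k"
definition W where "W k t = v k * exp (t *\<^sub>R b k)"
definition Phi where "Phi k t x = adj (W k t) * x * W k t"
definition Dk where "Dk k x = cs \<i> * (h k * x - x * h k)"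
definition sel where "sel k t1 t2 = (if S k = 1 then t1 else t2)"

fun mono :: "'n cm \<Rightarrow> (nat \<Rightarrow> nat) \<Rightarrow> real \<Rightarrow> real \<Rightarrow> nat \<Rightarrow> 'n cm" where
  "mono a e t1 t2 0 = a"
| "mono a e t1 t2 (Suc m) = (Dk (Suc m) ^^ e (Suc m)) (Phi (Suc m) (sel (Suc m) t1 t2) (mono a e t1 t2 m))"

lemma minus_b: "k \<in> {1..K} \<Longrightarrow> - b k = cs \<i> * h k"
proof -
  have "cs (- \<i>) = - (cs \<i> :: 'n cm)" by (rule cs_minus)
  then show ?thesis by (simp add: b_def)
qed

lemma b_eq: "k \<in> {1..K} \<Longrightarrow> b k = - (cs \<i> * h k)"
  using minus_b by (metis minus_minus)

lemma adj_b: "k \<in> {1..K} \<Longrightarrow> adj (b k) = - b k"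
  by (simp add: minus_b b_def adj_mult adj_cs herm cs_comm cs_minus adj_minus)

lemma adj_W: "k \<in> {1..K} \<Longrightarrow> adj (W k t) = exp (t *\<^sub>R (- b k)) * adj (v k)"
  by (simp add: W_def adj_mult adj_exp adj_scaleR adj_b)

lemma W_unit: assumes k: "k \<in> {1..K}"
  shows "adj (W k t) * W k t = 1" "W k t * adj (W k t) = 1"
proof -
  have e1: "exp (- (t *\<^sub>R b k)) * exp (t *\<^sub>R b k) = 1"
    using exp_minus_inverse[of "- (t *\<^sub>R b k)"] by simp
  have e2: "exp (t *\<^sub>R b k) * exp (- (t *\<^sub>R b k)) = 1"
    using exp_minus_inverse[of "t *\<^sub>R b k"] by simp
  have "adj (W k t) * W k t = exp (- (t *\<^sub>R b k)) * (adj (v k) * v k) * exp (t *\<^sub>R b k)"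
    unfolding adj_W[OF k] by (simp add: W_def mult.assoc)
  then show "adj (W k t) * W k t = 1" using unit[OF k] e1 by simp
  have "W k t * adj (W k t) = v k * (exp (t *\<^sub>R b k) * exp (- (t *\<^sub>R b k))) * adj (v k)"
    unfolding adj_W[OF k] by (simp add: W_def mult.assoc)
  then show "W k t * adj (W k t) = 1" using unit[OF k] e2 by simp
qed

lemma norm_Phi: assumes k: "k \<in> {1..K}" shows "norm (Phi k t x) \<le> norm x"
proof -
  have n1: "norm (W k t) \<le> 1" using W_unit[OF k] unitary_norm by blast
  have n2: "norm (adj (W k t)) \<le> 1" using W_unit[OF k] unitary_norm adj_adj by metis
  have "norm (Phi k t x) \<le> norm (adj (W k t) * x) * norm (W k t)"
    unfolding Phi_def by (rule norm_mult_ineq)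
  also have "\<dots> \<le> (norm (adj (W k t)) * norm x) * norm (W k t)"
    by (intro mult_right_mono norm_mult_ineq) simp
  also have "\<dots> \<le> (1 * norm x) * 1"
    by (intro mult_mono n1 n2 mult_nonneg_nonneg) auto
  finally show ?thesis by simp
qed

lemma norm_Dk: assumes k: "k \<in> {1..K}" shows "norm (Dk k x) \<le> 2 * om k * norm x"
proof -
  obtain c where c: "norm (h k - c *\<^sub>R 1) \<le> om k" using spec[OF k] by blast
  define g where "g = h k - c *\<^sub>R 1"
  have "Dk k x = cs \<i> * (g * x - x * g)" by (simp add: Dk_def g_def algebra_simps)
  then have "norm (Dk k x) \<le> norm (cs \<i> :: 'n cm) * norm (g * x - x * g)"
    by (simp add: norm_mult_ineq)
  also have "\<dots> \<le> 1 * (norm g * norm x + norm x * norm g)"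
  proof (rule mult_mono)
    show "norm (cs \<i> :: 'n cm) \<le> 1" using norm_cs[of \<i>] by simp
    have "norm (g * x - x * g) \<le> norm (g * x) + norm (x * g)" by (rule norm_triangle_ineq4)
    also have "\<dots> \<le> norm g * norm x + norm x * norm g" by (intro add_mono norm_mult_ineq)
    finally show "norm (g * x - x * g) \<le> norm g * norm x + norm x * norm g" .
  qed auto
  also have "\<dots> \<le> 2 * om k * norm x"
  proof -
    have "norm g * norm x \<le> om k * norm x" using c by (intro mult_right_mono) (auto simp: g_def)
    then show ?thesis by (simp add: mult.commute)
  qed
  finally show ?thesis .
qed

lemma norm_Dk_pow: assumes k: "k \<in> {1..K}" shows "norm ((Dk k ^^ n) x) \<le> (2 * om k)^n * norm x"
proof (induction n)
  case 0 then show ?case by simp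
next
  case (Suc n)
  have "norm ((Dk k ^^ Suc n) x) \<le> 2 * om k * norm ((Dk k ^^ n) x)" by (simp add: norm_Dk[OF k])
  also have "\<dots> \<le> 2 * om k * ((2 * om k)^n * norm x)"
    using Suc spec[OF k] by (intro mult_left_mono) auto
  finally show ?case by (simp add: mult_ac)
qed

lemma bl_Dk: "bounded_linear (Dk k)"
  unfolding Dk_def by (intro bounded_linear_intros)

lemma bl_Dk_pow: "bounded_linear (Dk k ^^ n)"
  by (induction n) (simp_all add: id_def bounded_linear_ident bounded_linear_compose[OF bl_Dk])

lemma bl_Phi: "bounded_linear (Phi k t)"
  unfolding Phi_def by (intro bounded_linear_intros)

end


context circ begin

lemma W_deriv:
  assumes th: "(\<theta> has_vector_derivative d\<theta>) (at t)"
  shows "((\<lambda>s. W k (\<theta> s)) has_vector_derivative (d\<theta> *\<^sub>R (W k (\<theta> t) * b k))) (at t)"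
proof -
  have "((\<lambda>s. exp (s *\<^sub>R b k)) \<circ> \<theta> has_vector_derivative d\<theta> *\<^sub>R (exp (\<theta> t *\<^sub>R b k) * b k)) (at t)"
    by (rule vector_diff_chain_at[OF th exp_scaleR_has_vector_derivative_right])
  then have "((\<lambda>s. v k * exp (\<theta> s *\<^sub>R b k)) has_vector_derivative v k * (d\<theta> *\<^sub>R (exp (\<theta> t *\<^sub>R b k) * b k))) (at t)"
    unfolding o_def by (rule has_vector_derivative_mult_right)
  then show ?thesis unfolding W_def by (simp add: mult.assoc)
qed

lemma adjW_deriv:
  assumes k: "k \<in> {1..K}" and th: "(\<theta> has_vector_derivative d\<theta>) (at t)"
  shows "((\<lambda>s. adj (W k (\<theta> s))) has_vector_derivative (d\<theta> *\<^sub>R (cs \<i> * h k * adj (W k (\<theta> t))))) (at t)"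
proof -
  have "((\<lambda>s. exp (s *\<^sub>R (- b k))) \<circ> \<theta> has_vector_derivative d\<theta> *\<^sub>R (exp (\<theta> t *\<^sub>R (- b k)) * (- b k))) (at t)"
    by (rule vector_diff_chain_at[OF th exp_scaleR_has_vector_derivative_right])
  then have "((\<lambda>s. exp (\<theta> s *\<^sub>R (- b k)) * adj (v k)) has_vector_derivative (d\<theta> *\<^sub>R (exp (\<theta> t *\<^sub>R (- b k)) * (- b k))) * adj (v k)) (at t)"
    unfolding o_def by (rule has_vector_derivative_mult_left)
  moreover have "(d\<theta> *\<^sub>R (exp (\<theta> t *\<^sub>R (- b k)) * (- b k))) * adj (v k) = d\<theta> *\<^sub>R (cs \<i> * h k * adj (W k (\<theta> t)))"
    by (simp only: exp_times_scaleR_commute adj_W[OF k] minus_b[OF k] mult.assoc scaleR_left_commute mult_scaleR_left)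
  ultimately show ?thesis by (simp only: adj_W[OF k])
qed

lemma Phi_deriv:
  assumes k: "k \<in> {1..K}" and th: "(\<theta> has_vector_derivative d\<theta>) (at t)"
    and xd: "(x has_vector_derivative x') (at t)"
  shows "((\<lambda>s. Phi k (\<theta> s) (x s)) has_vector_derivative (d\<theta> *\<^sub>R Dk k (Phi k (\<theta> t) (x t)) + Phi k (\<theta> t) x')) (at t)"
proof -
  have d1: "((\<lambda>s. adj (W k (\<theta> s)) * x s) has_vector_derivative
      (adj (W k (\<theta> t)) * x' + (d\<theta> *\<^sub>R (cs \<i> * h k * adj (W k (\<theta> t)))) * x t)) (at t)"
    by (rule has_vector_derivative_mult[OF adjW_deriv[OF k th] xd])
  have d2: "((\<lambda>s. adj (W k (\<theta> s)) * x s * W k (\<theta> s)) has_vector_derivative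
      (adj (W k (\<theta> t)) * x t * (d\<theta> *\<^sub>R (W k (\<theta> t) * b k)) +
       (adj (W k (\<theta> t)) * x' + (d\<theta> *\<^sub>R (cs \<i> * h k * adj (W k (\<theta> t)))) * x t) * W k (\<theta> t))) (at t)"
    by (rule has_vector_derivative_mult[OF d1 W_deriv[OF th]])
  show ?thesis unfolding Phi_def
    by (rule has_vector_derivative_eq_rhs[OF d2])
      (simp add: Dk_def b_eq[OF k] algebra_simps cs_left cs_right)
qed

end


lemma bl_sum: "bounded_linear f \<Longrightarrow> f (sum g A) = (\<Sum>x\<in>A. f (g x))"
  using linear_sum[OF bounded_linear.linear] by blast

context circ begin

lemma mono_cong: "(\<And>k. 1 \<le> k \<Longrightarrow> k \<le> m \<Longrightarrow> e k = e' k) \<Longrightarrow> mono a e t1 t2 m = mono a e' t1 t2 m"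
  by (induction m) auto

lemma sel_deriv:
  assumes j: "j \<in> {1,2}" and k: "k \<in> {1..K}"
  shows "((\<lambda>t. sel k (pp1 j t1 t) (pp2 j t2 t)) has_vector_derivative (if S k = j then 1 else 0)) (at t)"
  using S12[OF k] j by (auto simp: sel_def pp1_def pp2_def)

lemma mono_deriv:
  assumes j: "j \<in> {1,2}"
  shows "m \<le> K \<Longrightarrow> ((\<lambda>t. mono a e (pp1 j t1 t) (pp2 j t2 t) m) has_vector_derivative
    (\<Sum>k\<in>{k\<in>{1..m}. S k = j}. mono a (inc e k) (pp1 j t1 t) (pp2 j t2 t) m)) (at t)"
proof (induction m)
  case 0 then show ?case by simp
next
  case (Suc m)
  define k0 where "k0 = Suc m"
  have k0: "k0 \<in> {1..K}" using Suc.prems by (simp add: k0_def)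
  define th where "th = (\<lambda>t. sel k0 (pp1 j t1 t) (pp2 j t2 t))"
  define dth where "dth = (if S k0 = j then 1 else (0::real))"
  define X where "X = (\<lambda>t. mono a e (pp1 j t1 t) (pp2 j t2 t) m)"
  define X' where "X' = (\<Sum>k\<in>{k\<in>{1..m}. S k = j}. mono a (inc e k) (pp1 j t1 t) (pp2 j t2 t) m)"
  define n where "n = e k0"
  have IH: "(X has_vector_derivative X') (at t)" using Suc by (simp add: X_def X'_def)
  have thd: "(th has_vector_derivative dth) (at t)" unfolding th_def dth_def by (rule sel_deriv[OF j k0])
  have d: "((\<lambda>s. (Dk k0 ^^ n) (Phi k0 (th s) (X s))) has_vector_derivative
     (Dk k0 ^^ n) (dth *\<^sub>R Dk k0 (Phi k0 (th t) (X t)) + Phi k0 (th t) X')) (at t)"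
    by (rule bounded_linear.has_vector_derivative[OF bl_Dk_pow Phi_deriv[OF k0 thd IH]])
  have lhs: "(\<lambda>s. mono a e (pp1 j t1 s) (pp2 j t2 s) (Suc m)) = (\<lambda>s. (Dk k0 ^^ n) (Phi k0 (th s) (X s)))"
    by (simp add: k0_def th_def X_def n_def)
  have rhs1: "(Dk k0 ^^ n) (dth *\<^sub>R Dk k0 (Phi k0 (th t) (X t)) + Phi k0 (th t) X') =
     dth *\<^sub>R (Dk k0 ^^ Suc n) (Phi k0 (th t) (X t)) +
     (\<Sum>k\<in>{k\<in>{1..m}. S k = j}. (Dk k0 ^^ n) (Phi k0 (th t) (mono a (inc e k) (pp1 j t1 t) (pp2 j t2 t) m)))"
    by (simp add: linear_add[OF bounded_linear.linear[OF bl_Dk_pow]] linear_scale[OF bounded_linear.linear[OF bl_Dk_pow]]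
        X'_def bl_sum[OF bl_Phi] bl_sum[OF bl_Dk_pow] funpow_swap1)
  have terms: "mono a (inc e k) (pp1 j t1 t) (pp2 j t2 t) (Suc m) =
      (Dk k0 ^^ n) (Phi k0 (th t) (mono a (inc e k) (pp1 j t1 t) (pp2 j t2 t) m))"
    if "k \<in> {k\<in>{1..m}. S k = j}" for k
    using that by (simp add: k0_def th_def n_def inc_def)
  have top: "mono a (inc e k0) (pp1 j t1 t) (pp2 j t2 t) (Suc m) = (Dk k0 ^^ Suc n) (Phi k0 (th t) (X t))"
  proof -
    have "mono a (inc e k0) (pp1 j t1 t) (pp2 j t2 t) m = X t"
      unfolding X_def by (rule mono_cong) (simp add: inc_def k0_def)
    then show ?thesis by (simp add: k0_def th_def n_def inc_def funpow_swap1)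
  qed
  show ?case
  proof (cases "S k0 = j")
    case True
    have set: "{k\<in>{1..Suc m}. S k = j} = insert k0 {k\<in>{1..m}. S k = j}"
      using True by (auto simp: k0_def)
    have "(\<Sum>k\<in>{k\<in>{1..Suc m}. S k = j}. mono a (inc e k) (pp1 j t1 t) (pp2 j t2 t) (Suc m)) =
        (Dk k0 ^^ Suc n) (Phi k0 (th t) (X t)) +
        (\<Sum>k\<in>{k\<in>{1..m}. S k = j}. (Dk k0 ^^ n) (Phi k0 (th t) (mono a (inc e k) (pp1 j t1 t) (pp2 j t2 t) m)))"
    proof -
      have fin: "finite {k\<in>{1..m}. S k = j}" by simp
      have nin: "k0 \<notin> {k\<in>{1..m}. S k = j}" by (simp add: k0_def)
      have "(\<Sum>k\<in>{k\<in>{1..Suc m}. S k = j}. mono a (inc e k) (pp1 j t1 t) (pp2 j t2 t) (Suc m)) =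
        mono a (inc e k0) (pp1 j t1 t) (pp2 j t2 t) (Suc m) +
        (\<Sum>k\<in>{k\<in>{1..m}. S k = j}. mono a (inc e k) (pp1 j t1 t) (pp2 j t2 t) (Suc m))"
        unfolding set using sum.insert[OF fin nin] .
      also have "\<dots> = (Dk k0 ^^ Suc n) (Phi k0 (th t) (X t)) +
        (\<Sum>k\<in>{k\<in>{1..m}. S k = j}. (Dk k0 ^^ n) (Phi k0 (th t) (mono a (inc e k) (pp1 j t1 t) (pp2 j t2 t) m)))"
        by (simp only: top sum.cong[OF refl terms])
      finally show ?thesis .
    qed
    then show ?thesis using d True unfolding lhs rhs1 by (simp add: dth_def)
  next
    case False
    have set: "{k\<in>{1..Suc m}. S k = j} = {k\<in>{1..m}. S k = j}"
      using False by (auto simp: k0_def le_Suc_eq)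
    have "(\<Sum>k\<in>{k\<in>{1..Suc m}. S k = j}. mono a (inc e k) (pp1 j t1 t) (pp2 j t2 t) (Suc m)) =
        (\<Sum>k\<in>{k\<in>{1..m}. S k = j}. (Dk k0 ^^ n) (Phi k0 (th t) (mono a (inc e k) (pp1 j t1 t) (pp2 j t2 t) m)))"
      unfolding set by (rule sum.cong[OF refl]) (rule terms)
    then show ?thesis using d False unfolding lhs rhs1 by (simp add: dth_def)
  qed
qed

end


context circ begin

definition ks where "ks j = sorted_list_of_set {k\<in>{1..K}. S k = j}"
definition step where "step j es = concat (map (\<lambda>e. map (inc e) (ks j)) es)"
definition G where "G a es t1 t2 = sum_list (map (\<lambda>e. mono a e t1 t2 K) es)"

lemma sum_ks: "sum_list (map f (ks j)) = (\<Sum>k\<in>{k\<in>{1..K}. S k = j}. f k)"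
  by (simp add: ks_def sum_list_distinct_conv_sum_set)

lemma G_deriv:
  assumes j: "j \<in> {1,2}"
  shows "((\<lambda>t. G a es (pp1 j t1 t) (pp2 j t2 t)) has_vector_derivative G a (step j es) (pp1 j t1 t) (pp2 j t2 t)) (at t)"
proof (induction es)
  case Nil then show ?case by (simp add: G_def step_def)
next
  case (Cons e es)
  have d: "((\<lambda>t. mono a e (pp1 j t1 t) (pp2 j t2 t) K) has_vector_derivative
    (\<Sum>k\<in>{k\<in>{1..K}. S k = j}. mono a (inc e k) (pp1 j t1 t) (pp2 j t2 t) K)) (at t)"
    by (rule mono_deriv[OF j]) simp
  have "G a (step j (e # es)) (pp1 j t1 t) (pp2 j t2 t) =
     (\<Sum>k\<in>{k\<in>{1..K}. S k = j}. mono a (inc e k) (pp1 j t1 t) (pp2 j t2 t) K) + G a (step j es) (pp1 j t1 t) (pp2 j t2 t)"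
    by (simp add: G_def step_def sum_ks o_def)
  then show ?case using has_vector_derivative_add[OF d Cons.IH] by (simp add: G_def)
qed

lemma nth_deriv_G:
  assumes j: "j \<in> {1,2}"
  shows "nth_deriv q (\<lambda>t. Rep_cm (G a es (pp1 j t1 t) (pp2 j t2 t))) =
    (\<lambda>t. Rep_cm (G a ((step j ^^ q) es) (pp1 j t1 t) (pp2 j t2 t)))"
proof (induction q arbitrary: es)
  case 0 then show ?case by (simp add: nth_deriv_def)
next
  case (Suc q)
  have vd: "(\<lambda>t. vector_derivative (\<lambda>t. Rep_cm (G a es (pp1 j t1 t) (pp2 j t2 t))) (at t)) =
      (\<lambda>t. Rep_cm (G a (step j es) (pp1 j t1 t) (pp2 j t2 t)))"
    by (rule ext, rule vector_derivative_at, rule bounded_linear.has_vector_derivative[OF bl_Rep G_deriv[OF j]])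
  have "nth_deriv (Suc q) (\<lambda>t. Rep_cm (G a es (pp1 j t1 t) (pp2 j t2 t))) =
      nth_deriv q (\<lambda>t. vector_derivative (\<lambda>t. Rep_cm (G a es (pp1 j t1 t) (pp2 j t2 t))) (at t))"
    by (simp only: nth_deriv_def funpow_Suc_right o_apply)
  also have "\<dots> = (\<lambda>t. Rep_cm (G a ((step j ^^ q) (step j es)) (pp1 j t1 t) (pp2 j t2 t)))"
    unfolding vd by (rule Suc.IH)
  also have "(step j ^^ q) (step j es) = (step j ^^ Suc q) es" by (simp add: funpow_swap1)
  finally show ?case .
qed

definition N where "N e = (\<Prod>k\<in>{1..K}. (2 * om k) ^ e k)"
definition cj where "cj j = (\<Sum>k\<in>{k\<in>{1..K}. S k = j}. 2 * om k)"

lemma norm_mono: "m \<le> K \<Longrightarrow> norm (mono a e t1 t2 m) \<le> (\<Prod>k\<in>{1..m}. (2 * om k) ^ e k) * norm a"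
proof (induction m)
  case 0 then show ?case by simp
next
  case (Suc m)
  have k: "Suc m \<in> {1..K}" using Suc.prems by simp
  have om: "0 \<le> om k" if "k \<in> {1..m}" for k using spec[of k] that Suc.prems by auto
  have "norm (mono a e t1 t2 (Suc m)) \<le> (2 * om (Suc m)) ^ e (Suc m) * norm (Phi (Suc m) (sel (Suc m) t1 t2) (mono a e t1 t2 m))"
    by (simp only: mono.simps) (rule norm_Dk_pow[OF k])
  also have "\<dots> \<le> (2 * om (Suc m)) ^ e (Suc m) * ((\<Prod>k\<in>{1..m}. (2 * om k) ^ e k) * norm a)"
    using spec[OF k] Suc by (intro mult_left_mono order.trans[OF norm_Phi[OF k]]) auto
  also have "\<dots> = (\<Prod>k\<in>{1..Suc m}. (2 * om k) ^ e k) * norm a"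
    by (simp add: prod.nat_ivl_Suc')
  finally show ?case .
qed

lemma norm_G: "norm (G a es t1 t2) \<le> sum_list (map N es) * norm a"
proof (induction es)
  case Nil then show ?case by (simp add: G_def)
next
  case (Cons e es)
  have "norm (G a (e # es) t1 t2) \<le> norm (mono a e t1 t2 K) + norm (G a es t1 t2)"
    by (simp add: G_def norm_triangle_ineq)
  also have "\<dots> \<le> N e * norm a + sum_list (map N es) * norm a"
  proof (rule add_mono)
    show "norm (mono a e t1 t2 K) \<le> N e * norm a" unfolding N_def by (rule norm_mono) simp
  qed (rule Cons)
  finally show ?case by (simp add: algebra_simps)
qed

lemma N_inc: assumes k: "k \<in> {1..K}" shows "N (inc e k) = 2 * om k * N e"
proof -
  have "N (inc e k) = (2 * om k) ^ Suc (e k) * (\<Prod>k'\<in>{1..K} - {k}. (2 * om k') ^ inc e k k')"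
    unfolding N_def using k by (subst prod.remove[of _ k]) (auto simp: inc_def)
  also have "(\<Prod>k'\<in>{1..K} - {k}. (2 * om k') ^ inc e k k') = (\<Prod>k'\<in>{1..K} - {k}. (2 * om k') ^ e k')"
    by (rule prod.cong) (auto simp: inc_def)
  also have "N e = (2 * om k) ^ e k * (\<Prod>k'\<in>{1..K} - {k}. (2 * om k') ^ e k')"
    unfolding N_def using k by (subst prod.remove[of _ k]) auto
  ultimately show ?thesis by simp
qed

lemma sumN_step: "sum_list (map N (step j es)) = cj j * sum_list (map N es)"
proof (induction es)
  case Nil then show ?case by (simp add: step_def)
next
  case (Cons e es)
  have "sum_list (map N (map (inc e) (ks j))) = (\<Sum>k\<in>{k\<in>{1..K}. S k = j}. N (inc e k))"
    by (simp add: sum_ks o_def)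
  also have "\<dots> = (\<Sum>k\<in>{k\<in>{1..K}. S k = j}. 2 * om k * N e)"
    by (rule sum.cong) (auto simp: N_inc)
  also have "\<dots> = cj j * N e" by (simp add: cj_def sum_distrib_right)
  finally have "sum_list (map N (map (inc e) (ks j))) = cj j * N e" .
  then show ?case using Cons by (simp add: step_def algebra_simps)
qed

lemma sumN_iter: "sum_list (map N ((step j ^^ q) es)) = cj j ^ q * sum_list (map N es)"
  by (induction q) (simp_all add: sumN_step)

end


lemma foldr_mult_cm: "foldr (\<lambda>k acc. f k * acc) xs y = foldr (\<lambda>k acc. f k * acc) xs 1 * (y :: 'n::finite cm)"
  by (induction xs) (simp_all add: mult.assoc)

context circ begin

definition Uc where "Uc t1 t2 m = foldr (\<lambda>k acc. W k (sel k t1 t2) * acc) [1..<m+1] 1"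

lemma Uc_Suc: "Uc t1 t2 (Suc m) = Uc t1 t2 m * W (Suc m) (sel (Suc m) t1 t2)"
proof -
  have "Uc t1 t2 (Suc m) = foldr (\<lambda>k acc. W k (sel k t1 t2) * acc) [1..<m+1] (W (Suc m) (sel (Suc m) t1 t2) * 1)"
    by (simp add: Uc_def)
  also have "\<dots> = Uc t1 t2 m * W (Suc m) (sel (Suc m) t1 t2)"
    unfolding Uc_def by (subst foldr_mult_cm) simp
  finally show ?thesis .
qed

lemma Uc_mono: "m \<le> K \<Longrightarrow> adj (Uc t1 t2 m) * a * Uc t1 t2 m = mono a (\<lambda>_. 0) t1 t2 m"
proof (induction m)
  case 0 then show ?case by (simp add: Uc_def adj_one)
next
  case (Suc m)
  have IH: "adj (Uc t1 t2 m) * a * Uc t1 t2 m = mono a (\<lambda>_. 0) t1 t2 m"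
    using Suc.IH Suc.prems by simp
  have "adj (Uc t1 t2 (Suc m)) * a * Uc t1 t2 (Suc m) =
      adj (W (Suc m) (sel (Suc m) t1 t2)) * (adj (Uc t1 t2 m) * a * Uc t1 t2 m) * W (Suc m) (sel (Suc m) t1 t2)"
    by (simp add: Uc_Suc adj_mult mult.assoc)
  then show ?case by (simp add: IH Phi_def)
qed

end

theorem lemma7_aux:
  fixes H V :: "nat \<Rightarrow> complex^'n^'n" and S :: "nat \<Rightarrow> nat" and K :: nat
    and A :: "complex^'n^'n" and p1 p2 :: nat and \<phi>1 \<phi>2 :: real
  assumes herm: "\<forall>k\<in>{1..K}. hermitian_mat (H k)"
    and unit: "\<forall>k\<in>{1..K}. unitary_mat (V k)"
    and S12: "\<forall>k\<in>{1..K}. S k \<in> {1, 2}"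
  shows "op_norm (mixed_partial p1 p2 (\<lambda>t1 t2. channel H V S K t1 t2 A) \<phi>1 \<phi>2)
    \<le> (\<Sum>l\<in>{l\<in>{1..K}. S l = 1}. 2 * omega_max (H l)) ^ p1
      * (\<Sum>l\<in>{l\<in>{1..K}. S l = 2}. 2 * omega_max (H l)) ^ p2 * op_norm A"
proof -
  define h where "h k = (Abs_cm (H k) :: 'n cm)" for k
  define v where "v k = (Abs_cm (V k) :: 'n cm)" for k
  define om where "om k = omega_max (H k)" for k
  interpret C: circ h v S K om
  proof
    fix k assume k: "k \<in> {1..K}"
    show "adj (h k) = h k" using herm k by (simp add: h_def adj_def Abs_cm_inverse hermitian_mat_def)
    show "adj (v k) * v k = 1 \<and> v k * adj (v k) = 1"
      using unit k by (auto intro!: cm_eqI simp: v_def Rep_adj Rep_ops Abs_cm_inverse unitary_mat_def)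
    show "S k \<in> {1, 2}" using S12 k by blast
    obtain c where c: "op_norm (H k - c *\<^sub>R mat 1) \<le> omega_max (H k)" and ge: "0 \<le> omega_max (H k)"
      using hermitian_spectral[of "H k"] herm k by blast
    have "norm (h k - c *\<^sub>R 1) = op_norm (H k - c *\<^sub>R mat 1)"
      by (simp add: norm_Rep[symmetric] Rep_ops h_def Abs_cm_inverse)
    then have "norm (h k - c *\<^sub>R 1) \<le> om k" using c by (simp add: om_def)
    then show "0 \<le> om k \<and> (\<exists>c. norm (h k - c *\<^sub>R 1) \<le> om k)" using ge unfolding om_def by blast
  qed
  define a where "a = (Abs_cm A :: 'n cm)"
  have Wrep: "Rep_cm (C.W k t) = V k ** mat_exp (cscale (- \<i> * complex_of_real t) (H k))" for k t
  proof -
    have cs1: "cs (- \<i> * complex_of_real t) = (t *\<^sub>R cs (- \<i>) :: 'n cm)"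
      using cs_mult[of "- \<i>" "complex_of_real t", symmetric] by (simp only: cs_of_real mult_scaleR_right mult_1_right)
    have "Abs_cm (cscale (- \<i> * complex_of_real t) (H k)) = t *\<^sub>R C.b k"
      by (simp only: cs_Abs cs1 C.b_def h_def mult_scaleR_left)
    then show ?thesis by (simp add: C.W_def Rep_ops mat_exp_Rep v_def Abs_cm_inverse)
  qed
  have circ_eq: "foldr (\<lambda>k acc. (V k ** mat_exp (cscale (- \<i> * complex_of_real (if S k = 1 then t1 else t2)) (H k))) ** acc) xs (mat 1)
      = Rep_cm (foldr (\<lambda>k acc. C.W k (C.sel k t1 t2) * acc) xs 1)" for xs t1 t2
    by (induction xs) (simp_all add: Rep_ops Wrep C.sel_def)
  have chan: "channel H V S K t1 t2 A = Rep_cm (C.G a [\<lambda>_. 0] t1 t2)" for t1 t2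
  proof -
    have "circuit_U H V S K t1 t2 = Rep_cm (C.Uc t1 t2 K)"
      unfolding circuit_U_def C.Uc_def by (rule circ_eq)
    then have "channel H V S K t1 t2 A = Rep_cm (adj (C.Uc t1 t2 K) * a * C.Uc t1 t2 K)"
      by (simp add: channel_def Rep_ops Rep_adj a_def Abs_cm_inverse)
    then show ?thesis by (simp add: C.Uc_mono C.G_def)
  qed
  define es2 where "es2 = (C.step 2 ^^ p2) [\<lambda>_. 0]"
  define es12 where "es12 = (C.step 1 ^^ p1) es2"
  have inner: "nth_deriv p2 (\<lambda>t2. channel H V S K t1 t2 A) x2 = Rep_cm (C.G a es2 t1 x2)" for t1 x2
  proof -
    have "(\<lambda>t2. channel H V S K t1 t2 A) = (\<lambda>t. Rep_cm (C.G a [\<lambda>_. 0] (pp1 2 t1 t) (pp2 2 x2 t)))"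
      by (simp add: chan pp1_def pp2_def)
    then show ?thesis using C.nth_deriv_G[of 2 p2 a "[\<lambda>_. 0]" t1 x2]
      by (simp add: es2_def pp1_def pp2_def)
  qed
  have outer: "mixed_partial p1 p2 (\<lambda>t1 t2. channel H V S K t1 t2 A) \<phi>1 \<phi>2 = Rep_cm (C.G a es12 \<phi>1 \<phi>2)"
  proof -
    have "(\<lambda>t1. nth_deriv p2 (\<lambda>t2. channel H V S K t1 t2 A) \<phi>2) = (\<lambda>t. Rep_cm (C.G a es2 (pp1 1 \<phi>1 t) (pp2 1 \<phi>2 t)))"
      by (simp add: inner pp1_def pp2_def)
    then show ?thesis unfolding mixed_partial_def using C.nth_deriv_G[of 1 p1 a es2 \<phi>1 \<phi>2]
      by (simp add: es12_def pp1_def pp2_def)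
  qed
  have "op_norm (mixed_partial p1 p2 (\<lambda>t1 t2. channel H V S K t1 t2 A) \<phi>1 \<phi>2) = norm (C.G a es12 \<phi>1 \<phi>2)"
    by (simp add: outer norm_Rep)
  also have "\<dots> \<le> sum_list (map C.N es12) * norm a" by (rule C.norm_G)
  also have "sum_list (map C.N es12) = C.cj 1 ^ p1 * C.cj 2 ^ p2"
    by (simp add: es12_def es2_def C.sumN_iter C.N_def)
  also have "norm a = op_norm A" by (simp add: a_def norm_Rep[symmetric] Abs_cm_inverse)
  finally have "op_norm (mixed_partial p1 p2 (\<lambda>t1 t2. channel H V S K t1 t2 A) \<phi>1 \<phi>2)
    \<le> C.cj 1 ^ p1 * C.cj 2 ^ p2 * op_norm A" .
  then show ?thesis unfolding C.cj_def om_def .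
qed


theorem lemma7:
  fixes H V :: "nat \<Rightarrow> complex^'n^'n" and S :: "nat \<Rightarrow> nat" and K :: nat
    and A :: "complex^'n^'n" and p1 p2 :: nat and \<phi>1 \<phi>2 :: real
  assumes herm: "\<forall>k\<in>{1..K}. hermitian_mat (H k)"
    and unit: "\<forall>k\<in>{1..K}. unitary_mat (V k)"
    and S12: "\<forall>k\<in>{1..K}. S k \<in> {1, 2}"
  shows "op_norm (mixed_partial p1 p2 (\<lambda>t1 t2. channel H V S K t1 t2 A) \<phi>1 \<phi>2)
    \<le> (\<Sum>l\<in>{l\<in>{1..K}. S l = 1}. 2 * omega_max (H l)) ^ p1
      * (\<Sum>l\<in>{l\<in>{1..K}. S l = 2}. 2 * omega_max (H l)) ^ p2 * op_norm A"
  by (rule lemma7_aux[OF herm unit S12])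

end
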